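(* Let $N_3(t)=\mathbb{E}[Z_3(t)]$ be the expected number of vertices of degree $3$ in a Random Apollonian Network after $t$ steps. Then for all $t\ge 1$, $$\Big|N_3(t) - \frac{2}{5} t\Big|\leq K, \quad\text{where } K=3.6.$$
   Context: A Random Apollonian Network (RAN) is generated as follows: start (at time $t=0$) with a single triangular face. At each step $t=1,2,\dots$, pick one of the current (bounded) triangular faces uniformly at random, insert a new vertex inside it, and connect it to the three vertices on the boundary of that face, subdividing the face into three new triangular faces. After $t$ steps there are $2t+1$ triangular faces. $Z_k(t)$ denotes the number of vertices of degree exactly $k$ after $t$ steps. *)

theory Defs
  imports "HOL-Probability.Probability"
begin

text \<open>A state of a Random Apollonian Network: number of vertices n (vertices are 0..n-1),
  the set of edges (2-element vertex sets) and the set of bounded triangular faces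
  (3-element vertex sets).\<close>
record ran_state =
  nverts :: nat
  edges :: "nat set set"
  faces :: "nat set set"

definition ran_init :: ran_state where
  "ran_init = \<lparr> nverts = 3, edges = {{0,1},{1,2},{0,2}}, faces = {{0,1,2}} \<rparr>"

definition ran_insert :: "ran_state \<Rightarrow> nat set \<Rightarrow> ran_state" where
  "ran_insert s F = \<lparr> nverts = Suc (nverts s),
     edges = edges s \<union> {{nverts s, x} | x. x \<in> F},
     faces = (faces s - {F}) \<union> {insert (nverts s) (F - {x}) | x. x \<in> F} \<rparr>"

definition ran_step :: "ran_state \<Rightarrow> ran_state pmf" where
  "ran_step s = map_pmf (ran_insert s) (pmf_of_set (faces s))"

fun ran :: "nat \<Rightarrow> ran_state pmf" where
  "ran 0 = return_pmf ran_init"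
| "ran (Suc t) = bind_pmf (ran t) ran_step"

definition degree :: "ran_state \<Rightarrow> nat \<Rightarrow> nat" where
  "degree s v = card {e \<in> edges s. v \<in> e}"

definition Z :: "nat \<Rightarrow> ran_state \<Rightarrow> nat" where
  "Z k s = card {v. v < nverts s \<and> degree s v = k}"

definition N3 :: "nat \<Rightarrow> real" where
  "N3 t = measure_pmf.expectation (ran t) (\<lambda>s. real (Z 3 s))"

end

theory Submission
  imports Defs
begin


definition fc :: "ran_state \<Rightarrow> nat \<Rightarrow> nat" where
  "fc s v = card {F \<in> faces s. v \<in> F}"

definition Inv :: "nat \<Rightarrow> ran_state \<Rightarrow> bool" where
"Inv t s \<longleftrightarrow> nverts s = t+3 \<and> finite (faces s) \<and> card (faces s) = 2*t+1
  \<and> (\<forall>F\<in>faces s. card F = 3 \<and> F \<subseteq> {..<nverts s}) \<and> finite (edges s)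
  \<and> (\<forall>e\<in>edges s. e \<subseteq> {..<nverts s})
  \<and> (\<forall>v<nverts s. fc s v + (if v<3 then 1 else 0) = degree s v)
  \<and> (t = 0 \<longrightarrow> s = ran_init) \<and> (0<t \<longrightarrow> (\<forall>v<nverts s. 3 \<le> degree s v))"

lemma insert_explicit:
  assumes F: "F = {a,b,c}" "a\<noteq>b" "b\<noteq>c" "a\<noteq>c"
  shows "faces (ran_insert s F) = (faces s - {F}) \<union> {{nverts s,b,c},{nverts s,a,c},{nverts s,a,b}}"
    "edges (ran_insert s F) = edges s \<union> {{nverts s,a},{nverts s,b},{nverts s,c}}"
    "nverts (ran_insert s F) = Suc (nverts s)"
proof -
  have im: "{insert (nverts s) (F - {x}) | x. x \<in> F} = (\<lambda>x. insert (nverts s) (F - {x})) ` F" by blast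
  have "{a,b,c} - {a} = {b,c}" "{a,b,c} - {b} = {a,c}" "{a,b,c} - {c} = {a,b}" using F by auto
  then have "{insert (nverts s) (F - {x}) | x. x \<in> F} = {{nverts s,b,c},{nverts s,a,c},{nverts s,a,b}}"
    unfolding im using F(1) by simp
  then show "faces (ran_insert s F) = (faces s - {F}) \<union> {{nverts s,b,c},{nverts s,a,c},{nverts s,a,b}}"
    by (simp add: ran_insert_def)
  have "{{nverts s, x} | x. x \<in> F} = (\<lambda>x. {nverts s, x}) ` F" by blast
  then have "{{nverts s, x} | x. x \<in> F} = {{nverts s,a},{nverts s,b},{nverts s,c}}"
    using F by simp
  then show "edges (ran_insert s F) = edges s \<union> {{nverts s,a},{nverts s,b},{nverts s,c}}"
    by (simp add: ran_insert_def)
  show "nverts (ran_insert s F) = Suc (nverts s)" by (simp add: ran_insert_def)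
qed

lemma deg_new:
  assumes F: "F = {a,b,c}" "a\<noteq>b" "b\<noteq>c" "a\<noteq>c" "F \<subseteq> {..<nverts s}"
    and E: "finite (edges s)" "\<forall>e\<in>edges s. e \<subseteq> {..<nverts s}"
  shows "v < nverts s \<Longrightarrow> degree (ran_insert s F) v = degree s v + (if v \<in> F then 1 else 0)"
    "degree (ran_insert s F) (nverts s) = 3"
proof -
  let ?n = "nverts s"
  have eq: "{e \<in> edges (ran_insert s F). w \<in> e} = {e \<in> edges s. w \<in> e} \<union> {e \<in> {{?n,a},{?n,b},{?n,c}}. w \<in> e}" for w
    using insert_explicit[OF F(1-4)] by auto
  have disj: "{e \<in> edges s. w \<in> e} \<inter> {e \<in> {{?n,a},{?n,b},{?n,c}}. w \<in> e} = {}" for w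
    using E by fastforce
  have c: "degree (ran_insert s F) w = degree s w + card {e \<in> {{?n,a},{?n,b},{?n,c}}. w \<in> e}" for w
    unfolding degree_def eq using E disj by (subst card_Un_disjoint) auto
  show "v < nverts s \<Longrightarrow> degree (ran_insert s F) v = degree s v + (if v \<in> F then 1 else 0)"
  proof -
    assume v: "v < ?n"
    have "{e \<in> {{?n,a},{?n,b},{?n,c}}. v \<in> e} = (if v \<in> F then {{?n,v}} else {})"
      using v F by auto
    then show ?thesis using c by simp
  qed
  have h0: "{e \<in> edges s. ?n \<in> e} = {}" using E by fastforce
  have h1: "{e \<in> {{?n,a},{?n,b},{?n,c}}. ?n \<in> e} = {{?n,a},{?n,b},{?n,c}}" by auto
  have "card {{?n,a},{?n,b},{?n,c}} = 3" using F by (auto simp: doubleton_eq_iff)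
  then have "degree s ?n = 0" "card {e \<in> {{?n,a},{?n,b},{?n,c}}. ?n \<in> e} = 3"
    unfolding degree_def h0 h1 by simp_all
  then show "degree (ran_insert s F) ?n = 3" using c[of ?n] by simp
qed

lemma fc_new:
  assumes F: "F = {a,b,c}" "a\<noteq>b" "b\<noteq>c" "a\<noteq>c" "F \<subseteq> {..<nverts s}" "F \<in> faces s"
    and E: "finite (faces s)" "\<forall>G\<in>faces s. G \<subseteq> {..<nverts s}"
  shows "v < nverts s \<Longrightarrow> fc (ran_insert s F) v = fc s v + (if v \<in> F then 1 else 0)"
    "fc (ran_insert s F) (nverts s) = 3"
    "card (faces (ran_insert s F)) = card (faces s) + 2"
proof -
  let ?n = "nverts s"
  define NG where "NG = {{?n,b,c},{?n,a,c},{?n,a,b}}"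
  have an: "a < ?n" "b < ?n" "c < ?n" using F by auto
  have d1: "{?n,b,c} \<noteq> {?n,a,c}"
  proof
    assume h: "{?n,b,c} = {?n,a,c}"
    have "a \<in> {?n,a,c}" by simp
    moreover have "a \<notin> {?n,b,c}" using F an by auto
    ultimately show False using h by simp
  qed
  have d2: "{?n,b,c} \<noteq> {?n,a,b}"
  proof
    assume h: "{?n,b,c} = {?n,a,b}"
    have "a \<in> {?n,a,b}" by simp
    moreover have "a \<notin> {?n,b,c}" using F an by auto
    ultimately show False using h by simp
  qed
  have d3: "{?n,a,c} \<noteq> {?n,a,b}"
  proof
    assume h: "{?n,a,c} = {?n,a,b}"
    have "b \<in> {?n,a,b}" by simp
    moreover have "b \<notin> {?n,a,c}" using F an by auto
    ultimately show False using h by simp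
  qed
  have cNG: "card NG = 3" unfolding NG_def using d1 d2 d3 by simp
  have fNG: "finite NG" unfolding NG_def by simp
  have fa: "faces (ran_insert s F) = (faces s - {F}) \<union> NG"
    using insert_explicit[OF F(1-4)] NG_def by simp
  have disjNG: "(faces s - {F}) \<inter> NG = {}" unfolding NG_def using E by fastforce
  have cpos: "card (faces s) > 0" using E F(6) card_gt_0_iff by auto
  show "card (faces (ran_insert s F)) = card (faces s) + 2"
    using cpos unfolding fa using E disjNG cNG fNG F(6)
    by (subst card_Un_disjoint) (auto simp: card_Diff_singleton)
  have eq: "{G \<in> faces (ran_insert s F). w \<in> G} = ({G \<in> faces s. w \<in> G} - {F}) \<union> {G \<in> NG. w \<in> G}" for w
    unfolding fa by auto
  have c: "fc (ran_insert s F) w = card ({G \<in> faces s. w \<in> G} - {F}) + card {G \<in> NG. w \<in> G}" for w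
    unfolding fc_def eq using E disjNG fNG by (subst card_Un_disjoint) auto
  show "v < nverts s \<Longrightarrow> fc (ran_insert s F) v = fc s v + (if v \<in> F then 1 else 0)"
  proof -
    assume v: "v < ?n"
    have "card {G \<in> NG. v \<in> G} = (if v \<in> F then 2 else 0)"
    proof (cases "v \<in> F")
      case True
      then consider "v = a" | "v = b" | "v = c" using F by auto
      then show ?thesis
      proof cases
        case 1
        then have "{G \<in> NG. v \<in> G} = {{?n,a,c},{?n,a,b}}" unfolding NG_def using F v by auto
        then show ?thesis using d3 True by simp
      next
        case 2
        then have "{G \<in> NG. v \<in> G} = {{?n,b,c},{?n,a,b}}" unfolding NG_def using F v by auto
        then show ?thesis using d2 True by simp
      next
        case 3
        then have "{G \<in> NG. v \<in> G} = {{?n,b,c},{?n,a,c}}" unfolding NG_def using F v by auto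
        then show ?thesis using d1 True by simp
      qed
    next
      case False
      then have h: "{G \<in> NG. v \<in> G} = {}" unfolding NG_def using F v by auto
      show ?thesis using False unfolding h by simp
    qed
    moreover have "card ({G \<in> faces s. v \<in> G} - {F}) + (if v \<in> F then 1 else 0) = fc s v"
    proof (cases "v \<in> F")
      case True
      then have "F \<in> {G \<in> faces s. v \<in> G}" using F by simp
      moreover have "finite {G \<in> faces s. v \<in> G}" using E by simp
      ultimately have "card {G \<in> faces s. v \<in> G} \<ge> 1" by (metis card_0_eq empty_iff less_one not_le)
      then show ?thesis using True F E unfolding fc_def by (simp add: card_Diff_singleton)
    qed (simp add: fc_def)
    ultimately show ?thesis unfolding c by (cases "v \<in> F") auto
  qed
  have h0: "{G \<in> faces s. ?n \<in> G} = {}" using E by fastforce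
  have h1: "{G \<in> NG. ?n \<in> G} = NG" unfolding NG_def by auto
  show "fc (ran_insert s F) ?n = 3" unfolding c h0 h1 using cNG by simp
qed

lemma coll_ins: "{x \<in> insert a A. P x} = (if P a then insert a {x\<in>A. P x} else {x\<in>A. P x})"
  by auto

lemma deg_init: assumes that: "v < 3" shows "degree ran_init v = 2"
proof -
  from that consider "v = 0" | "v = 1" | "v = 2" by linarith
  then show ?thesis
  proof cases
    case 1
    then have "{e \<in> edges ran_init. v \<in> e} = {{0,1},{0,2}}" by (simp only: ran_init_def ran_state.simps coll_ins) simp
    then show ?thesis by (simp add: degree_def doubleton_eq_iff)
  next
    case 2
    then have "{e \<in> edges ran_init. v \<in> e} = {{0,1},{1,2}}" by (simp only: ran_init_def ran_state.simps coll_ins) simp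
    then show ?thesis by (simp add: degree_def doubleton_eq_iff)
  next
    case 3
    then have "{e \<in> edges ran_init. v \<in> e} = {{1,2},{0,2}}" by (simp only: ran_init_def ran_state.simps coll_ins) simp
    then show ?thesis by (simp add: degree_def doubleton_eq_iff)
  qed
qed

lemma Inv_init: "Inv 0 ran_init"
proof -
  note d = deg_init
  have f: "fc ran_init v = 1" if "v < 3" for v
  proof -
    have "{F \<in> faces ran_init. v \<in> F} = {{0,1,2}}" using that by (auto simp: ran_init_def coll_ins)
    then show ?thesis by (simp add: fc_def)
  qed
  have e: "\<forall>e\<in>edges ran_init. e \<subseteq> {..<nverts ran_init}" by (simp add: ran_init_def)
  have g: "\<forall>F\<in>faces ran_init. card F = 3 \<and> F \<subseteq> {..<nverts ran_init}" by (simp add: ran_init_def)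
  have h: "nverts ran_init = 3" "finite (faces ran_init)" "card (faces ran_init) = 1" "finite (edges ran_init)"
    by (simp_all add: ran_init_def)
  have k: "\<forall>v<nverts ran_init. fc ran_init v + (if v<3 then 1 else 0) = degree ran_init v"
    using d f h(1) by simp
  show ?thesis unfolding Inv_def using e g h k by simp
qed

lemma Inv_step:
  assumes I: "Inv t s" and F: "F \<in> faces s"
  shows "Inv (Suc t) (ran_insert s F)"
proof -
  let ?n = "nverts s"
  let ?s = "ran_insert s F"
  have I1_1: "nverts s = t+3" using I unfolding Inv_def by blast
  have I1_2: "finite (faces s)" using I unfolding Inv_def by blast
  have I1_3: "card (faces s) = 2*t+1" using I unfolding Inv_def by blast
  have I1_4: "\<And>G. G\<in>faces s \<Longrightarrow> card G = 3 \<and> G \<subseteq> {..<nverts s}" using I unfolding Inv_def by blast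
  have I1_5: "finite (edges s)" using I unfolding Inv_def by blast
  have I1_6: "\<And>e. e\<in>edges s \<Longrightarrow> e \<subseteq> {..<nverts s}" using I unfolding Inv_def by blast
  have I1_7: "\<And>v. v<nverts s \<Longrightarrow> fc s v + (if v<3 then 1 else 0) = degree s v" using I unfolding Inv_def by blast
  have I1_8: "t = 0 \<Longrightarrow> s = ran_init" using I unfolding Inv_def by blast
  have I1_9: "\<And>v. 0<t \<Longrightarrow> v<nverts s \<Longrightarrow> 3 \<le> degree s v" using I unfolding Inv_def by blast
  note I1 = I1_1 I1_2 I1_3 I1_4 I1_5 I1_6 I1_7 I1_8 I1_9
  obtain a b c where abc: "F = {a,b,c}" "a\<noteq>b" "b\<noteq>c" "a\<noteq>c"
    using I1(4)[OF F] card_3_iff by metis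
  have Fsub: "F \<subseteq> {..<?n}" using I1(4)[OF F] by auto
  have an: "a < ?n" "b < ?n" "c < ?n" using Fsub abc by auto
  note X = insert_explicit[OF abc]
  note D = deg_new[OF abc Fsub I1(5)] 
  note FC = fc_new[OF abc Fsub F I1(2)]
  have Ebd: "\<forall>e\<in>edges s. e \<subseteq> {..<nverts s}" using I1(6) by blast
  have Fbd: "\<forall>G\<in>faces s. G \<subseteq> {..<nverts s}" using I1(4) by blast
  have c1: "nverts ?s = Suc t + 3" using X(3) I1(1) by simp
  have c2: "finite (faces ?s)" using X(1) I1(2) by simp
  have c3: "card (faces ?s) = 2 * Suc t + 1" using FC(3)[OF Fbd] I1(3) by simp
  have c4: "\<forall>G\<in>faces ?s. card G = 3 \<and> G \<subseteq> {..<nverts ?s}"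
  proof
    fix G assume "G \<in> faces ?s"
    then consider "G \<in> faces s" | "G = {?n,b,c}" | "G = {?n,a,c}" | "G = {?n,a,b}" using X by auto
    then show "card G = 3 \<and> G \<subseteq> {..<nverts ?s}"
    proof cases
      case 1
      then have "card G = 3" "G \<subseteq> {..<?n}" using I1(4) by blast+
      moreover have "{..<?n} \<subseteq> {..<nverts ?s}" using X(3) by auto
      ultimately show ?thesis by (meson subset_trans)
    next
      case 2 then show ?thesis using an abc X(3) by auto
    next
      case 3 then show ?thesis using an abc X(3) by auto
    next
      case 4 then show ?thesis using an abc X(3) by auto
    qed
  qed
  have c5: "finite (edges ?s)" using X(2) I1(5) by simp
  have c6: "\<forall>e\<in>edges ?s. e \<subseteq> {..<nverts ?s}"
  proof
    fix e assume "e \<in> edges ?s"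
    then consider "e \<in> edges s" | "e = {?n,a}" | "e = {?n,b}" | "e = {?n,c}" using X by auto
    then show "e \<subseteq> {..<nverts ?s}"
    proof cases
      case 1
      then have "e \<subseteq> {..<?n}" using I1(6) by blast
      moreover have "{..<?n} \<subseteq> {..<nverts ?s}" using X(3) by auto
      ultimately show ?thesis by (meson subset_trans)
    qed (use an X(3) in auto)
  qed
  have c7: "\<forall>v<nverts ?s. fc ?s v + (if v<3 then 1 else 0) = degree ?s v"
  proof (intro allI impI)
    fix v assume "v < nverts ?s"
    then have "v < ?n \<or> v = ?n" using X by auto
    then show "fc ?s v + (if v<3 then 1 else 0) = degree ?s v"
    proof
      assume v: "v < ?n"
      show ?thesis using FC(1)[OF Fbd v] D(1)[OF Ebd v] I1(7)[OF v] by simp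
    next
      assume v: "v = ?n"
      show ?thesis using FC(2)[OF Fbd] D(2)[OF Ebd] I1(1) v by simp
    qed
  qed
  have c9: "\<forall>v<nverts ?s. 3 \<le> degree ?s v"
  proof (intro allI impI)
    fix v assume "v < nverts ?s"
    then have "v < ?n \<or> v = ?n" using X by auto
    then show "3 \<le> degree ?s v"
    proof
      assume v: "v < ?n"
      show ?thesis
      proof (cases "t = 0")
        case True
        then have s0: "s = ran_init" using I1(8) by simp
        then have "F = {0,1,2}" using F by (simp add: ran_init_def)
        moreover have "v < 3" using v s0 by (simp add: ran_init_def)
        ultimately have vF: "v \<in> F" by auto
        then have m: "F \<in> {G \<in> faces s. v \<in> G}" using F by simp
        have "finite {G \<in> faces s. v \<in> G}" using I1(2) by simp
        then have "card {G \<in> faces s. v \<in> G} \<ge> 1" using m by (metis card_0_eq empty_iff less_one not_le)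
        then have "fc s v \<ge> 1" unfolding fc_def .
        then show ?thesis using D(1)[OF Ebd v] I1(7)[OF v] vF \<open>v < 3\<close> by simp
      next
        case False
        then show ?thesis using D(1)[OF Ebd v] I1(9)[OF _ v] by simp
      qed
    next
      assume v: "v = ?n"
      show ?thesis using D(2)[OF Ebd] v by simp
    qed
  qed
  have c8: "Suc t = 0 \<longrightarrow> ?s = ran_init" by simp
  have c10: "0 < Suc t \<longrightarrow> (\<forall>v<nverts ?s. 3 \<le> degree ?s v)" using c9 by blast
  show ?thesis unfolding Inv_def by (intro conjI c1 c2 c3 c4 c5 c6 c7 c8 c10)
qed

lemma Inv_ran: "s \<in> set_pmf (ran t) \<Longrightarrow> Inv t s"
proof (induction t arbitrary: s)
  case 0
  then show ?case using Inv_init by simp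
next
  case (Suc t)
  then obtain s0 where s0: "s0 \<in> set_pmf (ran t)" "s \<in> set_pmf (ran_step s0)" by auto
  have I: "Inv t s0" using Suc.IH s0(1) .
  then have "finite (faces s0)" "faces s0 \<noteq> {}" unfolding Inv_def by auto
  then obtain F where "F \<in> faces s0" "s = ran_insert s0 F" using s0(2) by (auto simp: ran_step_def)
  then show ?case using Inv_step[OF I] by simp
qed

lemma finite_ran: "finite (set_pmf (ran t))"
proof (induction t)
  case 0
  then show ?case by simp
next
  case (Suc t)
  have "finite (set_pmf (ran_step s))" if "s \<in> set_pmf (ran t)" for s
  proof -
    have "finite (faces s)" "faces s \<noteq> {}" using Inv_ran[OF that] unfolding Inv_def by auto
    then show ?thesis by (simp add: ran_step_def)
  qed
  then show ?case using Suc by simp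
qed



lemma InvD:
  assumes I: "Inv t s"
  shows "nverts s = t+3" "finite (faces s)" "card (faces s) = 2*t+1"
    "\<And>G. G\<in>faces s \<Longrightarrow> card G = 3 \<and> G \<subseteq> {..<nverts s}" "finite (edges s)"
    "\<And>e. e\<in>edges s \<Longrightarrow> e \<subseteq> {..<nverts s}"
    "\<And>v. v<nverts s \<Longrightarrow> fc s v + (if v<3 then 1 else 0) = degree s v"
    "t = 0 \<Longrightarrow> s = ran_init" "\<And>v. 0<t \<Longrightarrow> v<nverts s \<Longrightarrow> 3 \<le> degree s v"
  using I unfolding Inv_def by blast+

lemma deg_step:
  assumes I: "Inv t s" and F: "F \<in> faces s"
  shows "\<And>v. v < nverts s \<Longrightarrow> degree (ran_insert s F) v = degree s v + (if v \<in> F then 1 else 0)"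
    "degree (ran_insert s F) (nverts s) = 3" "nverts (ran_insert s F) = Suc (nverts s)"
    "F \<subseteq> {..<nverts s}" "finite F"
proof -
  obtain a b c where abc: "F = {a,b,c}" "a\<noteq>b" "b\<noteq>c" "a\<noteq>c"
    using InvD(4)[OF I F] card_3_iff by metis
  have Fsub: "F \<subseteq> {..<nverts s}" using InvD(4)[OF I F] by blast
  have Ebd: "\<forall>e\<in>edges s. e \<subseteq> {..<nverts s}" using InvD(6)[OF I] by blast
  note D = deg_new[OF abc Fsub InvD(5)[OF I] Ebd]
  show "\<And>v. v < nverts s \<Longrightarrow> degree (ran_insert s F) v = degree s v + (if v \<in> F then 1 else 0)"
    using D(1) .
  show "degree (ran_insert s F) (nverts s) = 3" using D(2) .
  show "nverts (ran_insert s F) = Suc (nverts s)" by (simp add: ran_insert_def)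
  show "F \<subseteq> {..<nverts s}" by (rule Fsub)
  show "finite F" using abc by simp
qed

lemma Z_alt: "Z k s = card {v \<in> {..<nverts s}. degree s v = k}"
  unfolding Z_def by (rule arg_cong[where f=card]) auto

lemma Z_step:
  assumes I: "Inv t s" and t: "0 < t" and F: "F \<in> faces s"
  shows "real (Z 3 (ran_insert s F)) = real (Z 3 s) + 1 - real (card {v \<in> F. degree s v = 3})"
proof -
  let ?n = "nverts s"
  let ?s = "ran_insert s F"
  define A where "A = {v \<in> {..<?n}. degree s v = 3}"
  note DS = deg_step[OF I F]
  have S: "{v \<in> {..<nverts ?s}. degree ?s v = 3} = (A - F) \<union> {?n}"
  proof (rule set_eqI)
    fix v
    show "v \<in> {v \<in> {..<nverts ?s}. degree ?s v = 3} \<longleftrightarrow> v \<in> (A - F) \<union> {?n}"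
    proof (cases "v < ?n")
      case True
      have "3 \<le> degree s v" using InvD(9)[OF I t True] .
      then show ?thesis using DS(1)[OF True] DS(3) True unfolding A_def by auto
    next
      case False
      then show ?thesis using DS(2) DS(3) unfolding A_def by auto
    qed
  qed
  have fA: "finite A" unfolding A_def by simp
  have nA: "?n \<notin> A" unfolding A_def by simp
  have AF: "A \<inter> F = {v \<in> F. degree s v = 3}" using DS(4) unfolding A_def by auto
  have c1: "card ((A - F) \<union> {?n}) = card (A - F) + 1" using fA nA by simp
  have c2: "card (A - F) = card A - card (A \<inter> F)" using fA by (simp add: card_Diff_subset_Int)
  have c3: "card (A \<inter> F) \<le> card A" using fA by (simp add: card_mono)
  have "Z 3 ?s = card A - card (A \<inter> F) + 1" unfolding Z_alt S c1 c2 ..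
  moreover have "Z 3 s = card A" unfolding Z_alt A_def ..
  ultimately show ?thesis using c3 AF by (simp add: of_nat_diff)
qed

lemma double_count:
  assumes "finite A" "finite V" "\<And>F. F \<in> A \<Longrightarrow> F \<subseteq> V"
  shows "(\<Sum>F\<in>A. card {v \<in> F. P v}) = (\<Sum>v\<in>{v \<in> V. P v}. card {F \<in> A. v \<in> F})"
proof -
  have "card {v \<in> F. P v} = (\<Sum>v\<in>{v \<in> V. P v}. if v \<in> F then 1 else 0)" if "F \<in> A" for F
  proof -
    have "{v \<in> F. P v} = {v \<in> {v \<in> V. P v}. v \<in> F}" using assms(3)[OF that] by auto
    then show ?thesis using assms(2) by (simp add: sum.inter_filter[symmetric])
  qed
  then have "(\<Sum>F\<in>A. card {v \<in> F. P v}) = (\<Sum>F\<in>A. \<Sum>v\<in>{v \<in> V. P v}. if v \<in> F then 1 else 0)"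
    by (rule sum.cong[OF refl])
  also have "\<dots> = (\<Sum>v\<in>{v \<in> V. P v}. \<Sum>F\<in>A. if v \<in> F then 1 else 0)" by (rule sum.swap)
  also have "\<dots> = (\<Sum>v\<in>{v \<in> V. P v}. card {F \<in> A. v \<in> F})"
    using assms(1) by (simp add: sum.inter_filter[symmetric])
  finally show ?thesis .
qed

definition W :: "ran_state \<Rightarrow> nat" where
  "W s = (\<Sum>F\<in>faces s. card {v \<in> F. degree s v = 3})"

lemma W_bounds:
  assumes I: "Inv t s"
  shows "3 * real (Z 3 s) - 3 \<le> real (W s)" "real (W s) \<le> 3 * real (Z 3 s)"
proof -
  let ?n = "nverts s"
  define A where "A = {v \<in> {..<?n}. degree s v = 3}"
  have fA: "finite A" unfolding A_def by simp
  have "W s = (\<Sum>v\<in>A. fc s v)"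
    unfolding W_def A_def fc_def
    by (rule double_count) (use InvD(2,4)[OF I] in auto)
  also have "\<dots> = (\<Sum>v\<in>A. 3 - (if v < 3 then 1 else 0))"
  proof (rule sum.cong[OF refl])
    fix v assume "v \<in> A"
    then have "v < ?n" "degree s v = 3" unfolding A_def by auto
    then show "fc s v = 3 - (if v < 3 then 1 else 0)" using InvD(7)[OF I] by force
  qed
  finally have "real (W s) = (\<Sum>v\<in>A. real (3 - (if v < 3 then 1 else 0)))"
    by (metis of_nat_sum)
  also have "\<dots> = (\<Sum>v\<in>A. 3 - (if v < 3 then 1 else 0::real))"
    by (rule sum.cong) auto
  also have "\<dots> = 3 * real (card A) - real (card {v \<in> A. v < 3})"
    using fA by (simp add: sum_subtractf sum.inter_filter[symmetric])
  finally have Weq: "real (W s) = 3 * real (card A) - real (card {v \<in> A. v < 3})" .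
  have "card {v \<in> A. v < 3} \<le> card {..<(3::nat)}" by (rule card_mono) auto
  then have le3: "card {v \<in> A. v < 3} \<le> 3" by simp
  have ZA: "Z 3 s = card A" unfolding Z_alt A_def ..
  show "3 * real (Z 3 s) - 3 \<le> real (W s)" using Weq ZA le3 by simp
  show "real (W s) \<le> 3 * real (Z 3 s)" using Weq ZA by simp
qed



lemma e1: fixes x::real assumes "x \<ge> 1"
  shows "2/5*(x+1) \<le> (1 - 3/(2*x+1)) * (2/5*x) + 1"
proof -
  define q where "q = 3/(2*x+1)"
  have d: "2*x+1 > 0" using assms by simp
  have d2: "2*x+1 \<noteq> 0" using d by simp
  have "q * (2*x+1) = 3" unfolding q_def using d2 by (metis divide_eq_eq)
  then have q1: "2 * (q * x) + q = 3" by (simp add: field_simps)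
  have q0: "q \<ge> 0" unfolding q_def using d by simp
  define p where "p = q * x"
  have q1': "2 * p + q = 3" using q1 unfolding p_def .
  have ex: "(1-q)*(2/5*x) + 1 = 2/5*x - 2/5*p + 1" unfolding p_def by (simp add: field_simps)
  have "2/5*x - 2/5*p + 1 \<ge> 2/5*x + 2/5" using q1' q0 by linarith
  moreover have "2/5*(x+1) = 2/5*x + (2/5::real)" by (simp only: distrib_left mult_1_right)
  ultimately show ?thesis using ex unfolding q_def by linarith
qed

lemma e2: fixes x::real assumes "x \<ge> 1"
  shows "(1 - 3/(2*x+1)) * (2/5*x + 3.6) + 1 + 3/(2*x+1) \<le> 2/5*(x+1) + 3.6"
proof -
  define q where "q = 3/(2*x+1)"
  have d: "2*x+1 > 0" using assms by simp
  have d2: "2*x+1 \<noteq> 0" using d by simp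
  have "q * (2*x+1) = 3" unfolding q_def using d2 by (metis divide_eq_eq)
  then have q1: "2 * (q * x) + q = 3" by (simp add: field_simps)
  have q0: "q \<ge> 0" unfolding q_def using d by simp
  have ee: "2/5*(x+1) = 2/5*x + (2/5::real)" by simp
  have ex: "(1-q)*(2/5*x+3.6) = 2/5*x - 2/5*(q*x) + 3.6 - 3.6*q" by (simp add: field_simps)
  have "(1 - q) * (2/5*x + 3.6) + 1 + q \<le> 2/5*(x+1) + 3.6"
    using ex q1 q0 ee by linarith
  then show ?thesis unfolding q_def .
qed

lemma step_exp:
  assumes I: "Inv t s" and t: "0 < t"
  shows "measure_pmf.expectation (ran_step s) (\<lambda>x. real (Z 3 x))
         = real (Z 3 s) + 1 - real (W s) / (2 * real t + 1)"
proof -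
  have fin: "finite (faces s)" and ne: "faces s \<noteq> {}" and cd: "card (faces s) = 2*t+1"
    using InvD(2,3)[OF I] by auto
  have "measure_pmf.expectation (ran_step s) (\<lambda>x. real (Z 3 x))
      = (\<Sum>F\<in>faces s. real (Z 3 (ran_insert s F))) / real (card (faces s))"
    unfolding ran_step_def using fin ne by (simp add: integral_pmf_of_set)
  also have "(\<Sum>F\<in>faces s. real (Z 3 (ran_insert s F)))
     = (\<Sum>F\<in>faces s. real (Z 3 s) + 1 - real (card {v \<in> F. degree s v = 3}))"
    by (rule sum.cong[OF refl]) (rule Z_step[OF I t])
  also have "\<dots> = real (card (faces s)) * (real (Z 3 s) + 1) - real (W s)"
    unfolding W_def by (simp add: sum_subtractf sum.distrib algebra_simps)
  finally show ?thesis using cd by (simp add: field_simps)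
qed

lemma N3_sum: "N3 t = (\<Sum>s\<in>set_pmf (ran t). pmf (ran t) s * real (Z 3 s))"
  unfolding N3_def by (subst integral_measure_pmf[of "set_pmf (ran t)"]) (auto simp: finite_ran)

lemma sum_aux: "(\<Sum>s\<in>A. p s * (f s + c)) = (\<Sum>s\<in>A. p s * f s) + (\<Sum>s\<in>A. p s) * (c::real)"
  by (simp add: distrib_left sum.distrib sum_distrib_right)

lemma N3_rec:
  assumes t: "1 \<le> t"
  shows "(1 - 3 / (2 * real t + 1)) * N3 t + 1 \<le> N3 (Suc t)"
        "N3 (Suc t) \<le> (1 - 3 / (2 * real t + 1)) * N3 t + 1 + 3 / (2 * real t + 1)"
proof -
  let ?A = "set_pmf (ran t)"
  let ?E = "\<lambda>s. measure_pmf.expectation (ran_step s) (\<lambda>x. real (Z 3 x))"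
  let ?a = "1 - 3 / (2 * real t + 1)"
  let ?d = "2 * real t + 1"
  have fA: "finite ?A" by (rule finite_ran)
  have fstep: "finite (set_pmf (ran_step x))" if "x \<in> ?A" for x
  proof -
    have "finite (faces x)" "faces x \<noteq> {}" using InvD(2,3)[OF Inv_ran[OF that]] by auto
    then show ?thesis by (simp add: ran_step_def)
  qed
  have N1: "N3 (Suc t) = (\<Sum>s\<in>?A. pmf (ran t) s * ?E s)"
    unfolding N3_def ran.simps by (subst pmf_expectation_bind[of ?A]) (use fA fstep in auto)
  have sum1: "(\<Sum>s\<in>?A. pmf (ran t) s) = 1" using fA by (simp add: sum_pmf_eq_1)
  have dpos: "?d > 0" by simp
  have bnd: "?a * real (Z 3 s) + 1 \<le> ?E s \<and> ?E s \<le> ?a * real (Z 3 s) + 1 + 3 / ?d" if "s \<in> ?A" for s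
  proof -
    have I: "Inv t s" using Inv_ran[OF that] .
    have t0: "0 < t" using t by simp
    note e = step_exp[OF I t0]
    note w = W_bounds[OF I]
    have "3 * real (Z 3 s) / ?d - 3 / ?d \<le> real (W s) / ?d"
      using w(1) dpos by (simp add: divide_right_mono diff_divide_distrib[symmetric])
    moreover have "real (W s) / ?d \<le> 3 * real (Z 3 s) / ?d"
      using w(2) dpos by (simp add: divide_right_mono)
    ultimately show ?thesis unfolding e by (simp add: algebra_simps)
  qed
  have lo: "(\<Sum>s\<in>?A. pmf (ran t) s * (?a * real (Z 3 s) + 1)) \<le> (\<Sum>s\<in>?A. pmf (ran t) s * ?E s)"
    by (rule sum_mono) (use bnd in \<open>auto intro: mult_left_mono\<close>)
  have hi: "(\<Sum>s\<in>?A. pmf (ran t) s * ?E s) \<le> (\<Sum>s\<in>?A. pmf (ran t) s * (?a * real (Z 3 s) + 1 + 3 / ?d))"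
    by (rule sum_mono) (use bnd in \<open>auto intro: mult_left_mono\<close>)
  have eq1: "(\<Sum>s\<in>?A. pmf (ran t) s * (?a * real (Z 3 s) + 1)) = ?a * N3 t + 1"
    unfolding N3_sum using sum1
    by (simp add: distrib_left sum.distrib sum_distrib_left mult.left_commute)
  have "(\<Sum>s\<in>?A. pmf (ran t) s * (?a * real (Z 3 s) + 1 + 3 / ?d))
     = (\<Sum>s\<in>?A. pmf (ran t) s * (?a * real (Z 3 s) + 1)) + (\<Sum>s\<in>?A. pmf (ran t) s) * (3 / ?d)"
    by (rule sum_aux)
  then have eq2: "(\<Sum>s\<in>?A. pmf (ran t) s * (?a * real (Z 3 s) + 1 + 3 / ?d)) = ?a * N3 t + 1 + 3 / ?d"
    using eq1 sum1 by simp
  show "?a * N3 t + 1 \<le> N3 (Suc t)" using lo eq1 N1 by simp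
  show "N3 (Suc t) \<le> ?a * N3 t + 1 + 3 / ?d" using hi eq2 N1 by simp
qed

lemma N3_1: "N3 1 = 4"
proof -
  have fi: "faces ran_init = {{0,1,2}}" by (simp add: ran_init_def)
  have r0: "ran 1 = ran_step ran_init" by (simp only: One_nat_def ran.simps bind_return_pmf)
  have r1: "ran 1 = return_pmf (ran_insert ran_init {0,1,2})"
    unfolding r0 ran_step_def fi pmf_of_set_singleton by simp
  have I: "Inv 0 ran_init" by (rule Inv_init)
  have F: "{0,1,2} \<in> faces ran_init" by (simp add: ran_init_def)
  note DS = deg_step[OF I F]
  have n: "nverts ran_init = 3" by (simp add: ran_init_def)
  have "{v. v < nverts (ran_insert ran_init {0,1,2}) \<and> degree (ran_insert ran_init {0,1,2}) v = 3} = {..<4}"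
  proof (rule set_eqI)
    fix v
    show "v \<in> {v. v < nverts (ran_insert ran_init {0,1,2}) \<and> degree (ran_insert ran_init {0,1,2}) v = 3} \<longleftrightarrow> v \<in> {..<4}"
    proof (cases "v < 3")
      case True
      then have "v \<in> {0,1,2::nat}" by auto
      then show ?thesis using DS(1)[of v] DS(3) deg_init[OF True] True n by auto
    next
      case False
      then show ?thesis using DS(2) DS(3) n by (cases "v = 3") auto
    qed
  qed
  then have "Z 3 (ran_insert ran_init {0,1,2}) = 4" unfolding Z_def by simp
  then show ?thesis unfolding N3_def r1 by simp
qed

theorem mainTheorem2:
  fixes t :: nat
  assumes "t \<ge> 1"
  shows "\<bar>N3 t - (2/5) * real t\<bar> \<le> 3.6"
  proof -
  have "2/5 * real t \<le> N3 t \<and> N3 t \<le> 2/5 * real t + 3.6"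
    using assms
  proof (induction t rule: dec_induct)
    case base
    then show ?case using N3_1 by simp
  next
    case (step t)
    note r = N3_rec[OF step(1)]
    let ?d = "2 * real t + 1"
    have dpos: "?d > 0" by simp
    have a0: "0 \<le> 1 - 3 / ?d" using step(1) by (simp add: field_simps)
    have lo: "(1 - 3/?d) * (2/5 * real t) \<le> (1 - 3/?d) * N3 t"
      using step(3) a0 by (intro mult_left_mono) auto
    have hi: "(1 - 3/?d) * N3 t \<le> (1 - 3/?d) * (2/5 * real t + 3.6)"
      using step(3) a0 by (intro mult_left_mono) auto
    have e1: "2/5 * real (Suc t) \<le> (1 - 3/?d) * (2/5 * real t) + 1"
      using e1[of "real t"] step(1) by simp
    have h: "real (Suc t) = real t + 1" by simp
    have e2: "(1 - 3/?d) * (2/5 * real t + 3.6) + 1 + 3/?d \<le> 2/5 * real (Suc t) + 3.6"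
      unfolding h by (rule e2) (use step(1) in simp)
    show ?case using r lo hi e1 e2 by linarith
  qed
  then show ?thesis by (simp add: abs_le_iff)
qed


end
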